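(* Let $G$ be a two-player stage game with $|V_1^{p,p}|>1$ and $|V_2^{p,p}|>1$. If $G\in\mathcal{G}_{LS}^{m,m}$, then $G\in\mathcal{G}_{LS}^{p,p}$.
   Context: A two-player stage game $G$ has finite nonempty action sets $A_1,A_2$ and payoffs $u_1,u_2:A_1\times A_2\to\mathbb{R}$, extended to mixed strategies by expectation. $G(T)$ is the $T$-round repetition with realized actions observed each round and payoffs the expected sum of stage payoffs; an SPE of $G(T)$ is a strategy profile whose continuation after every history of length $k<T$ is a Nash equilibrium of $G(T-k)$. Regimes: pure-pure ($p,p$): both players restricted to actions (in the stage game and in every round, including deviations); mixed-pure ($m,p$): player 1 may mix, player 2 uses only actions; mixed-mixed ($m,m$): both may mix. For regime $r$, $\mathrm{Nash}^r(G)$ is the set of stage-game profiles available in $r$ from which no player can profitably deviate unilaterally to a strategy available in $r$, and $V_i^r=\{u_i(\sigma):\sigma\in\mathrm{Nash}^r(G)\}$. Locally suboptimal behavior occurs in an SPE $\mu$ of $G(T)$ (regime $r$) if for some history $h$ of length $k<T$, $(\mu_1(h),\mu_2(h))\notin\mathrm{Nash}^r(G)$. $\mathcal{G}_{LS}^r$ is the set of stage games $G$ for which there exist $T\ge1$ and an SPE of $G(T)$ in regime $r$ in which locally suboptimal behavior occurs. *)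

theory Defs
  imports Complex_Main
begin

text \<open>Action sets are the finite (nonempty) types 'a (player 1) and 'b (player 2).
A regime is a pair of booleans (m1, m2): True = that player may mix, False = pure only.\<close>

definition mixed :: "('a::finite \<Rightarrow> real) set" where
  "mixed = {\<sigma>. (\<forall>x. 0 \<le> \<sigma> x) \<and> (\<Sum>x\<in>UNIV. \<sigma> x) = 1}"

definition pure :: "('a::finite \<Rightarrow> real) set" where
  "pure = range (\<lambda>a x. if x = a then 1 else 0)"

definition avail :: "bool \<Rightarrow> ('a::finite \<Rightarrow> real) set" where
  "avail m = (if m then mixed else pure)"

definition EU :: "('a::finite \<Rightarrow> 'b::finite \<Rightarrow> real) \<Rightarrow> ('a \<Rightarrow> real) \<Rightarrow> ('b \<Rightarrow> real) \<Rightarrow> real" where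
  "EU u s1 s2 = (\<Sum>a\<in>UNIV. \<Sum>b\<in>UNIV. s1 a * s2 b * u a b)"

definition stageNash :: "bool \<times> bool \<Rightarrow> ('a::finite \<Rightarrow> 'b::finite \<Rightarrow> real) \<Rightarrow> ('a \<Rightarrow> 'b \<Rightarrow> real)
    \<Rightarrow> (('a \<Rightarrow> real) \<times> ('b \<Rightarrow> real)) set" where
  "stageNash r u1 u2 = {(s1, s2). s1 \<in> avail (fst r) \<and> s2 \<in> avail (snd r) \<and>
      (\<forall>t1\<in>avail (fst r). EU u1 t1 s2 \<le> EU u1 s1 s2) \<and>
      (\<forall>t2\<in>avail (snd r). EU u2 s1 t2 \<le> EU u2 s1 s2)}"

definition V1 :: "bool \<times> bool \<Rightarrow> ('a::finite \<Rightarrow> 'b::finite \<Rightarrow> real) \<Rightarrow> ('a \<Rightarrow> 'b \<Rightarrow> real) \<Rightarrow> real set" where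
  "V1 r u1 u2 = (\<lambda>(s1, s2). EU u1 s1 s2) ` stageNash r u1 u2"

definition V2 :: "bool \<times> bool \<Rightarrow> ('a::finite \<Rightarrow> 'b::finite \<Rightarrow> real) \<Rightarrow> ('a \<Rightarrow> 'b \<Rightarrow> real) \<Rightarrow> real set" where
  "V2 r u1 u2 = (\<lambda>(s1, s2). EU u2 s1 s2) ` stageNash r u1 u2"

text \<open>A history is the list of realized action profiles (chronological).\<close>
fun rval :: "('a::finite \<Rightarrow> 'b::finite \<Rightarrow> real) \<Rightarrow> (('a \<times> 'b) list \<Rightarrow> 'a \<Rightarrow> real)
    \<Rightarrow> (('a \<times> 'b) list \<Rightarrow> 'b \<Rightarrow> real) \<Rightarrow> ('a \<times> 'b) list \<Rightarrow> nat \<Rightarrow> real" where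
  "rval u f1 f2 h 0 = 0"
| "rval u f1 f2 h (Suc n) =
     (\<Sum>a\<in>UNIV. \<Sum>b\<in>UNIV. f1 h a * f2 h b * (u a b + rval u f1 f2 (h @ [(a, b)]) n))"

definition strat :: "bool \<Rightarrow> (('a::finite \<times> 'b::finite) list \<Rightarrow> 'c::finite \<Rightarrow> real) \<Rightarrow> bool" where
  "strat m f = (\<forall>h. f h \<in> avail m)"

definition repNash :: "bool \<times> bool \<Rightarrow> ('a::finite \<Rightarrow> 'b::finite \<Rightarrow> real) \<Rightarrow> ('a \<Rightarrow> 'b \<Rightarrow> real) \<Rightarrow> nat
    \<Rightarrow> (('a \<times> 'b) list \<Rightarrow> 'a \<Rightarrow> real) \<Rightarrow> (('a \<times> 'b) list \<Rightarrow> 'b \<Rightarrow> real) \<Rightarrow> bool" where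
  "repNash r u1 u2 T f1 f2 = (strat (fst r) f1 \<and> strat (snd r) f2 \<and>
      (\<forall>g1. strat (fst r) g1 \<longrightarrow> rval u1 g1 f2 [] T \<le> rval u1 f1 f2 [] T) \<and>
      (\<forall>g2. strat (snd r) g2 \<longrightarrow> rval u2 f1 g2 [] T \<le> rval u2 f1 f2 [] T))"

definition cont :: "('h list \<Rightarrow> 'x) \<Rightarrow> 'h list \<Rightarrow> 'h list \<Rightarrow> 'x" where
  "cont f h = (\<lambda>h'. f (h @ h'))"

definition SPE :: "bool \<times> bool \<Rightarrow> ('a::finite \<Rightarrow> 'b::finite \<Rightarrow> real) \<Rightarrow> ('a \<Rightarrow> 'b \<Rightarrow> real) \<Rightarrow> nat
    \<Rightarrow> (('a \<times> 'b) list \<Rightarrow> 'a \<Rightarrow> real) \<Rightarrow> (('a \<times> 'b) list \<Rightarrow> 'b \<Rightarrow> real) \<Rightarrow> bool" where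
  "SPE r u1 u2 T f1 f2 = (strat (fst r) f1 \<and> strat (snd r) f2 \<and>
      (\<forall>h. length h < T \<longrightarrow> repNash r u1 u2 (T - length h) (cont f1 h) (cont f2 h)))"

definition LS :: "bool \<times> bool \<Rightarrow> ('a::finite \<Rightarrow> 'b::finite \<Rightarrow> real) \<Rightarrow> ('a \<Rightarrow> 'b \<Rightarrow> real) \<Rightarrow> bool" where
  "LS r u1 u2 = (\<exists>T\<ge>1. \<exists>f1 f2. SPE r u1 u2 T f1 f2 \<and>
      (\<exists>h. length h < T \<and> (f1 h, f2 h) \<notin> stageNash r u1 u2))"

end

theory Submission imports Defs begin

definition pt :: "'a \<Rightarrow> 'a \<Rightarrow> real" where "pt a = (\<lambda>x. if x = a then 1 else 0)"

lemma pure_eq: "pure = range pt" by (simp add: pure_def pt_def)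

lemma sum_pt: "(\<Sum>x\<in>(UNIV::'a::finite set). pt a x * F x) = F a"
  unfolding pt_def by (simp add: if_distrib[where f="\<lambda>c. c * F _"] cong: if_cong)

lemma sum_pt2: "(\<Sum>x\<in>(UNIV::'a::finite set). \<Sum>y\<in>(UNIV::'b::finite set). pt a x * pt b y * F x y) = F a b"
proof -
  have "(\<Sum>x\<in>(UNIV::'a set). \<Sum>y\<in>(UNIV::'b set). pt a x * pt b y * F x y)
      = (\<Sum>x\<in>(UNIV::'a set). pt a x * (\<Sum>y\<in>(UNIV::'b set). pt b y * F x y))"
    by (simp add: sum_distrib_left mult.assoc)
  also have "\<dots> = F a b" by (simp add: sum_pt)
  finally show ?thesis .
qed

lemma EU_pt: "EU u (pt a) (pt b) = u a b"
  unfolding EU_def by (rule sum_pt2)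

lemma rval_pt: "f1 h = pt a \<Longrightarrow> f2 h = pt b \<Longrightarrow>
   rval u f1 f2 h (Suc n) = u a b + rval u f1 f2 (h @ [(a,b)]) n"
  by (simp add: sum_pt2)

lemma shift_sum: "(\<Sum>k<Suc n. F (l + k)) = F l + (\<Sum>k<n. F (Suc (l + k)))"
  by (subst sum.lessThan_Suc_shift) simp

lemma rval_eq:
  assumes "\<And>hh. FF (hz @ hh) = pt (SS (length hh))" "\<And>hh. GG (hz @ hh) = pt (QQ (length hh))"
  shows "rval u FF GG (hz @ hh) n = (\<Sum>k<n. u (SS (length hh + k)) (QQ (length hh + k)))"
proof (induction n arbitrary: hh)
  case 0 then show ?case by simp
next
  case (Suc n)
  have "rval u FF GG (hz @ hh) (Suc n) = u (SS (length hh)) (QQ (length hh))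
     + rval u FF GG (hz @ (hh @ [(SS (length hh), QQ (length hh))])) n"
    using rval_pt[of FF "hz @ hh" _ GG _ u n, OF assms(1)[of hh] assms(2)[of hh]] by simp
  also have "\<dots> = (\<Sum>k<Suc n. u (SS (length hh + k)) (QQ (length hh + k)))"
    using Suc.IH[of "hh @ [(SS (length hh), QQ (length hh))]"]
    by (simp add: shift_sum[where F="\<lambda>j. u (SS j) (QQ j)"] del: sum.lessThan_Suc)
  finally show ?case .
qed

lemma rval_le1:
  assumes "\<And>hh. FF (hz @ hh) \<in> pure" "\<And>hh. GG (hz @ hh) = pt (QQ (length hh))"
    "\<And>k a. u a (QQ k) \<le> c k"
  shows "rval u FF GG (hz @ hh) n \<le> (\<Sum>k<n. c (length hh + k))"
proof (induction n arbitrary: hh)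
  case 0 then show ?case by simp
next
  case (Suc n)
  obtain a where a: "FF (hz @ hh) = pt a" using assms(1)[of hh] by (auto simp: pure_eq)
  have "rval u FF GG (hz @ hh) (Suc n) = u a (QQ (length hh))
     + rval u FF GG (hz @ (hh @ [(a, QQ (length hh))])) n"
    using rval_pt[of FF "hz @ hh" _ GG _ u n, OF a assms(2)[of hh]] by simp
  also have "\<dots> \<le> c (length hh) + (\<Sum>k<n. c (Suc (length hh) + k))"
    using Suc.IH[of "hh @ [(a, QQ (length hh))]"] assms(3)[of a "length hh"] by simp
  also have "\<dots> = (\<Sum>k<Suc n. c (length hh + k))"
    by (simp add: shift_sum del: sum.lessThan_Suc)
  finally show ?case .
qed

lemma rval_le2:
  assumes "\<And>hh. GG (hz @ hh) \<in> pure" "\<And>hh. FF (hz @ hh) = pt (SS (length hh))"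
    "\<And>k b. u (SS k) b \<le> c k"
  shows "rval u FF GG (hz @ hh) n \<le> (\<Sum>k<n. c (length hh + k))"
proof (induction n arbitrary: hh)
  case 0 then show ?case by simp
next
  case (Suc n)
  obtain b where b: "GG (hz @ hh) = pt b" using assms(1)[of hh] by (auto simp: pure_eq)
  have "rval u FF GG (hz @ hh) (Suc n) = u (SS (length hh)) b
     + rval u FF GG (hz @ (hh @ [(SS (length hh), b)])) n"
    using rval_pt[of FF "hz @ hh" _ GG _ u n, OF assms(2)[of hh] b] by simp
  also have "\<dots> \<le> c (length hh) + (\<Sum>k<n. c (Suc (length hh) + k))"
    using Suc.IH[of "hh @ [(SS (length hh), b)]"] assms(3)[of "length hh" b] by simp
  also have "\<dots> = (\<Sum>k<Suc n. c (length hh + k))"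
    by (simp add: shift_sum del: sum.lessThan_Suc)
  finally show ?case .
qed

lemma split_sum: "(\<Sum>k<2*L. if Suc k \<le> L then (A::real) else B) = real L * A + real L * B"
proof -
  have "{..<2*L} = {..<L} \<union> {L..<2*L}" by auto
  then have "(\<Sum>k<2*L. if Suc k \<le> L then A else B) = (\<Sum>k<L. if Suc k \<le> L then A else B) + (\<Sum>k\<in>{L..<2*L}. if Suc k \<le> L then A else B)"
    by (metis (no_types, lifting) finite_lessThan finite_atLeastLessThan ivl_disj_int_one(2) sum.union_disjoint)
  also have "\<dots> = (\<Sum>k<L. A) + (\<Sum>k\<in>{L..<2*L}. B)"
    by (intro arg_cong2[where f="(+)"] sum.cong) auto
  finally show ?thesis by simp
qed

lemma pureNE_iff: "((pt a, pt b) \<in> stageNash (False, False) u1 u2) \<longleftrightarrow>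
   (\<forall>a'. u1 a' b \<le> u1 a b) \<and> (\<forall>b'. u2 a b' \<le> u2 a b)"
  by (auto simp: stageNash_def avail_def pure_eq EU_pt)


lemma EU_const1:
  assumes "t \<in> mixed" "\<And>a b. u a b = w b"
  shows "EU u t s = (\<Sum>b\<in>UNIV. s b * w b)"
proof -
  have "EU u t s = (\<Sum>a\<in>UNIV. t a * (\<Sum>b\<in>UNIV. s b * w b))"
    unfolding EU_def assms(2) by (simp add: sum_distrib_left mult.assoc)
  also have "\<dots> = (\<Sum>a\<in>UNIV. t a) * (\<Sum>b\<in>UNIV. s b * w b)" by (simp add: sum_distrib_right)
  finally show ?thesis using assms(1) by (simp add: mixed_def)
qed

lemma EU_const2:
  assumes "t \<in> mixed" "\<And>a b. u a b = w a"
  shows "EU u s t = (\<Sum>a\<in>UNIV. s a * w a)"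
proof -
  have "EU u s t = (\<Sum>a\<in>UNIV. s a * w a * (\<Sum>b\<in>UNIV. t b))"
    unfolding EU_def assms(2) by (simp add: sum_distrib_left ac_simps)
  then show ?thesis using assms(1) by (simp add: mixed_def)
qed

lemma exists_nonNE:
  assumes "LS (True, True) u1 u2"
  shows "\<exists>a b. \<not> ((\<forall>a'. u1 a' b \<le> u1 a b) \<and> (\<forall>b'. u2 a b' \<le> u2 a b))"
proof (rule ccontr)
  assume "\<not> ?thesis"
  then have all: "\<And>a b a'. u1 a' b \<le> u1 a b" "\<And>a b b'. u2 a b' \<le> u2 a b" by auto
  have w1: "\<And>a b. u1 a b = u1 undefined b" using all(1) order_antisym by blast
  have w2: "\<And>a b. u2 a b = u2 a undefined" using all(2) order_antisym by blast
  from assms obtain T f1 f2 h where sp: "SPE (True,True) u1 u2 T f1 f2"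
    and nn: "(f1 h, f2 h) \<notin> stageNash (True,True) u1 u2" unfolding LS_def by blast
  have m1: "f1 h \<in> mixed" and m2: "f2 h \<in> mixed"
    using sp unfolding SPE_def strat_def avail_def by simp_all
  have e1: "EU u1 t s = (\<Sum>b\<in>UNIV. s b * u1 undefined b)" if "t \<in> mixed" for t s
    by (rule EU_const1[OF that w1])
  have e2: "EU u2 s t = (\<Sum>a\<in>UNIV. s a * u2 a undefined)" if "t \<in> mixed" for t s
    by (rule EU_const2[OF that w2])
  have "(f1 h, f2 h) \<in> stageNash (True,True) u1 u2"
    unfolding stageNash_def avail_def
    using m1 m2 e1 e2 by simp
  with nn show False by blast
qed

lemma card_gt1: "card (S::real set) > 1 \<Longrightarrow> \<exists>x\<in>S. \<exists>y\<in>S. x < y"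
proof (rule ccontr)
  assume c: "card S > 1" and n: "\<not> (\<exists>x\<in>S. \<exists>y\<in>S. x < y)"
  then have "S \<noteq> {}" by auto
  then obtain x where x: "x \<in> S" by auto
  have "S \<subseteq> {x}" proof
    fix y assume "y \<in> S"
    with n x have "\<not> x < y" "\<not> y < x" by auto
    then show "y \<in> {x}" by simp
  qed 
  then have "card S \<le> card {x}" by (intro card_mono) auto
  then have "card S \<le> 1" by simp
  with c show False by simp
qed


lemma obtain_min: "finite (N::'x set) \<Longrightarrow> y \<in> N \<Longrightarrow> \<exists>e\<in>N. \<forall>z\<in>N. (f e::real) \<le> f z"
proof -
  assume fN: "finite N" and y: "y \<in> N"
  have "Min (f ` N) \<in> f ` N" using fN y by (intro Min_in) auto
  then obtain e where e: "e \<in> N" "f e = Min (f ` N)" by auto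
  show ?thesis using e fN by (intro bexI[of _ e]) auto
qed

lemma le_dsum: "(\<And>a b. 0 \<le> F a b) \<Longrightarrow> (F a b::real) \<le> (\<Sum>x\<in>(UNIV::'a::finite set). \<Sum>y\<in>(UNIV::'b::finite set). F x y)"
proof -
  assume nn: "\<And>a b. 0 \<le> F a b"
  have "F a b \<le> (\<Sum>y\<in>(UNIV::'b set). F a y)" by (rule member_le_sum) (auto simp: nn)
  also have "\<dots> \<le> (\<Sum>x\<in>(UNIV::'a set). \<Sum>y\<in>(UNIV::'b set). F x y)"
    by (rule member_le_sum[where f="\<lambda>x. \<Sum>y\<in>UNIV. F x y"]) (auto simp: nn sum_nonneg)
  finally show ?thesis .
qed


theorem mainTheorem17:
  fixes u1 :: "'a::finite \<Rightarrow> 'b::finite \<Rightarrow> real" and u2 :: "'a \<Rightarrow> 'b \<Rightarrow> real"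
  assumes "card (V1 (False, False) u1 u2) > 1"
    and "card (V2 (False, False) u1 u2) > 1"
    and "LS (True, True) u1 u2"
  shows "LS (False, False) u1 u2"
proof -
  define isNE where "isNE x \<longleftrightarrow> (\<forall>a'. u1 a' (snd x) \<le> u1 (fst x) (snd x)) \<and> (\<forall>b'. u2 (fst x) b' \<le> u2 (fst x) (snd x))" for x
  define U1 where "U1 x = u1 (fst x) (snd x)" for x
  define U2 where "U2 x = u2 (fst x) (snd x)" for x
  define N where "N = {x. isNE x}"
  have fN: "finite N" by simp
  obtain a0 b0 where nne: "\<not> isNE (a0, b0)" using exists_nonNE[OF assms(3)] unfolding isNE_def by auto
  have V1N: "\<exists>x\<in>N. v = U1 x" if "v \<in> V1 (False, False) u1 u2" for v
  proof -
    from that obtain s1 s2 where s: "(s1, s2) \<in> stageNash (False, False) u1 u2" "v = EU u1 s1 s2"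
      unfolding V1_def by auto
    then obtain a b where ab: "s1 = pt a" "s2 = pt b" unfolding stageNash_def avail_def pure_eq by auto
    show ?thesis using s ab pureNE_iff[of a b u1 u2] by (auto simp: N_def isNE_def U1_def EU_pt)
  qed
  have V2N: "\<exists>x\<in>N. v = U2 x" if "v \<in> V2 (False, False) u1 u2" for v
  proof -
    from that obtain s1 s2 where s: "(s1, s2) \<in> stageNash (False, False) u1 u2" "v = EU u2 s1 s2"
      unfolding V2_def by auto
    then obtain a b where ab: "s1 = pt a" "s2 = pt b" unfolding stageNash_def avail_def pure_eq by auto
    show ?thesis using s ab pureNE_iff[of a b u1 u2] by (auto simp: N_def isNE_def U2_def EU_pt)
  qed
  obtain v w where vw: "v \<in> V1 (False, False) u1 u2" "w \<in> V1 (False, False) u1 u2" "v < w"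
    using card_gt1[OF assms(1)] by auto
  obtain x1 where x1: "x1 \<in> N" "v = U1 x1" using V1N[OF vw(1)] by auto
  obtain e1' where e1': "e1' \<in> N" "w = U1 e1'" using V1N[OF vw(2)] by auto
  obtain e1 where e1: "e1 \<in> N" "\<forall>z\<in>N. U1 e1 \<le> U1 z" using obtain_min[OF fN x1(1), of U1] by blast
  have d1: "U1 e1 < U1 e1'" using e1 x1 e1' vw(3) by force
  obtain v2 w2 where vw2: "v2 \<in> V2 (False, False) u1 u2" "w2 \<in> V2 (False, False) u1 u2" "v2 < w2"
    using card_gt1[OF assms(2)] by auto
  obtain x2 where x2: "x2 \<in> N" "v2 = U2 x2" using V2N[OF vw2(1)] by auto
  obtain e2' where e2': "e2' \<in> N" "w2 = U2 e2'" using V2N[OF vw2(2)] by auto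
  obtain e2 where e2: "e2 \<in> N" "\<forall>z\<in>N. U2 e2 \<le> U2 z" using obtain_min[OF fN x2(1), of U2] by blast
  have d2: "U2 e2 < U2 e2'" using e2 x2 e2' vw2(3) by force
  have c1: "U1 e1 \<le> U1 e2'" using e1 e2' by auto
  have c2: "U2 e2 \<le> U2 e1'" using e2 e1' by auto
  define B where "B = (\<Sum>x\<in>(UNIV::'a set). \<Sum>y\<in>(UNIV::'b set). \<bar>u1 x y\<bar> + \<bar>u2 x y\<bar>)"
  have B1: "\<bar>u1 a b\<bar> \<le> B" for a b
  proof -
    have "\<bar>u1 a b\<bar> + \<bar>u2 a b\<bar> \<le> B" unfolding B_def
      by (rule le_dsum[where F="\<lambda>x y. \<bar>u1 x y\<bar> + \<bar>u2 x y\<bar>"]) simp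
    then show ?thesis by simp
  qed
  have B2: "\<bar>u2 a b\<bar> \<le> B" for a b
  proof -
    have "\<bar>u1 a b\<bar> + \<bar>u2 a b\<bar> \<le> B" unfolding B_def
      by (rule le_dsum[where F="\<lambda>x y. \<bar>u1 x y\<bar> + \<bar>u2 x y\<bar>"]) simp
    then show ?thesis by simp
  qed
  define \<delta> where "\<delta> = min (U1 e1' - U1 e1) (U2 e2' - U2 e2)"
  have "\<delta> > 0" using d1 d2 by (simp add: \<delta>_def)
  then obtain L where L: "2 * B < real L * \<delta>" using ex_less_of_nat_mult by blast
  have L1: "real L * \<delta> \<le> real L * (U1 e1' - U1 e1)" by (rule mult_left_mono) (auto simp: \<delta>_def)
  have L2: "real L * \<delta> \<le> real L * (U2 e2' - U2 e2)" by (rule mult_left_mono) (auto simp: \<delta>_def)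
  have L1': "0 \<le> real L * (U1 e2' - U1 e1)" using c1 by simp
  have L2': "0 \<le> real L * (U2 e1' - U2 e2)" using c2 by simp
  define R where "R k = (if k \<le> L then e1' else e2')" for k
  define P where "P p k = (if p = (a0, b0) then R k else if snd p = b0 then e1 else e2)" for p k
  have PN: "isNE (P p k)" for p k using e1 e2 e1' e2' by (auto simp: P_def R_def N_def)
  have PN1: "u1 a (snd (P p k)) \<le> U1 (P p k)" for a p k using PN[of p k] by (simp add: isNE_def U1_def)
  have PN2: "u2 (fst (P p k)) b \<le> U2 (P p k)" for b p k using PN[of p k] by (simp add: isNE_def U2_def)
  define f1 where "f1 h = (if h = [] then pt a0 else pt (fst (P (hd h) (length h))))" for h
  define f2 where "f2 h = (if h = [] then pt b0 else pt (snd (P (hd h) (length h))))" for h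
  define T where "T = Suc (2 * L)"
  have sf1: "strat False f1" by (simp add: strat_def avail_def pure_eq f1_def)
  have sf2: "strat False f2" by (simp add: strat_def avail_def pure_eq f2_def)
  have Sc1: "(\<Sum>k<2*L. u1 (fst (P (a0,b0) (Suc k))) (snd (P (a0,b0) (Suc k)))) = real L * U1 e1' + real L * U1 e2'"
  proof -
    have "(\<Sum>k<2*L. u1 (fst (P (a0,b0) (Suc k))) (snd (P (a0,b0) (Suc k)))) = (\<Sum>k<2*L. if Suc k \<le> L then U1 e1' else U1 e2')"
      by (intro sum.cong refl) (simp add: P_def R_def U1_def)
    then show ?thesis by (simp add: split_sum)
  qed
  have Sc2: "(\<Sum>k<2*L. u2 (fst (P (a0,b0) (Suc k))) (snd (P (a0,b0) (Suc k)))) = real L * U2 e1' + real L * U2 e2'"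
  proof -
    have "(\<Sum>k<2*L. u2 (fst (P (a0,b0) (Suc k))) (snd (P (a0,b0) (Suc k)))) = (\<Sum>k<2*L. if Suc k \<le> L then U2 e1' else U2 e2')"
      by (intro sum.cong refl) (simp add: P_def R_def U2_def)
    then show ?thesis by (simp add: split_sum)
  qed
  have Sd1: "(\<Sum>k<2*L. U1 (P (a,b0) (Suc k))) = real (2*L) * U1 e1" if "a \<noteq> a0" for a
    using that by (simp add: P_def)
  have Sd2: "(\<Sum>k<2*L. U2 (P (a0,b) (Suc k))) = real (2*L) * U2 e2" if "b \<noteq> b0" for b
    using that by (simp add: P_def)
  have hyp1: "\<And>h'. f1 ([p] @ h') = pt (fst (P p (Suc (length h'))))" for p by (simp add: f1_def)
  have hyp2: "\<And>h'. f2 ([p] @ h') = pt (snd (P p (Suc (length h'))))" for p by (simp add: f2_def)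
  have eqf: "rval u f1 f2 [] T = u a0 b0 + (\<Sum>k<2*L. u (fst (P (a0,b0) (Suc k))) (snd (P (a0,b0) (Suc k))))" for u
  proof -
    have "rval u f1 f2 [] T = u a0 b0 + rval u f1 f2 ([(a0,b0)] @ []) (2*L)"
      unfolding T_def using rval_pt[of f1 "[]" a0 f2 b0 u "2*L"] by (simp add: f1_def f2_def)
    also have "rval u f1 f2 ([(a0,b0)] @ []) (2*L) = (\<Sum>k<2*L. u (fst (P (a0,b0) (Suc k))) (snd (P (a0,b0) (Suc k))))"
      using rval_eq[where FF=f1 and GG=f2 and hz="[(a0,b0)]" and SS="\<lambda>k. fst (P (a0,b0) (Suc k))"
          and QQ="\<lambda>k. snd (P (a0,b0) (Suc k))" and u=u and hh="[]" and n="2*L", OF hyp1 hyp2] by simp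
    finally show ?thesis .
  qed
  have root1: "rval u1 g1 f2 [] T \<le> rval u1 f1 f2 [] T" if g: "strat False g1" for g1
  proof -
    obtain a where a: "g1 [] = pt a" using g by (auto simp: strat_def avail_def pure_eq)
    have "rval u1 g1 f2 [] T = u1 a b0 + rval u1 g1 f2 ([(a,b0)] @ []) (2*L)"
      unfolding T_def using rval_pt[of g1 "[]" a f2 b0 u1 "2*L"] by (simp add: a f2_def)
    also have "rval u1 g1 f2 ([(a,b0)] @ []) (2*L) \<le> (\<Sum>k<2*L. U1 (P (a,b0) (Suc k)))"
      using rval_le1[where FF=g1 and GG=f2 and hz="[(a,b0)]" and QQ="\<lambda>k. snd (P (a,b0) (Suc k))"
          and c="\<lambda>k. U1 (P (a,b0) (Suc k))" and u=u1 and hh="[]" and n="2*L"] g hyp2 PN1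
      by (simp add: strat_def avail_def)
    finally have dev: "rval u1 g1 f2 [] T \<le> u1 a b0 + (\<Sum>k<2*L. U1 (P (a,b0) (Suc k)))" by simp
    show ?thesis
    proof (cases "a = a0")
      case True
      then show ?thesis using dev eqf[of u1] by (simp add: U1_def)
    next
      case False
      have "u1 a b0 \<le> B" "- B \<le> u1 a0 b0" using B1[of a b0] B1[of a0 b0] by (simp_all add: abs_le_iff)
      moreover have "real L * (U1 e1' - U1 e1) + real L * (U1 e2' - U1 e1) = real L * U1 e1' + real L * U1 e2' - real (2*L) * U1 e1"
        by (simp add: algebra_simps)
      ultimately show ?thesis using dev eqf[of u1] Sc1 Sd1[OF False] L L1 L1' by linarith
    qed
  qed
  have root2: "rval u2 f1 g2 [] T \<le> rval u2 f1 f2 [] T" if g: "strat False g2" for g2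
  proof -
    obtain b where b: "g2 [] = pt b" using g by (auto simp: strat_def avail_def pure_eq)
    have "rval u2 f1 g2 [] T = u2 a0 b + rval u2 f1 g2 ([(a0,b)] @ []) (2*L)"
      unfolding T_def using rval_pt[of f1 "[]" a0 g2 b u2 "2*L"] by (simp add: b f1_def)
    also have "rval u2 f1 g2 ([(a0,b)] @ []) (2*L) \<le> (\<Sum>k<2*L. U2 (P (a0,b) (Suc k)))"
      using rval_le2[where GG=g2 and FF=f1 and hz="[(a0,b)]" and SS="\<lambda>k. fst (P (a0,b) (Suc k))"
          and c="\<lambda>k. U2 (P (a0,b) (Suc k))" and u=u2 and hh="[]" and n="2*L"] g hyp1 PN2
      by (simp add: strat_def avail_def)
    finally have dev: "rval u2 f1 g2 [] T \<le> u2 a0 b + (\<Sum>k<2*L. U2 (P (a0,b) (Suc k)))" by simp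
    show ?thesis
    proof (cases "b = b0")
      case True
      then show ?thesis using dev eqf[of u2] by (simp add: U2_def)
    next
      case False
      have "u2 a0 b \<le> B" "- B \<le> u2 a0 b0" using B2[of a0 b] B2[of a0 b0] by (simp_all add: abs_le_iff)
      moreover have "real L * (U2 e2' - U2 e2) + real L * (U2 e1' - U2 e2) = real L * U2 e1' + real L * U2 e2' - real (2*L) * U2 e2"
        by (simp add: algebra_simps)
      ultimately show ?thesis using dev eqf[of u2] Sc2 Sd2[OF False] L L2 L2' by linarith
    qed
  qed
  have nonroot: "repNash (False, False) u1 u2 (T - length h) (cont f1 h) (cont f2 h)" if h: "h \<noteq> []" for h
  proof -
    define l where "l = length h"
    define p where "p = hd h"
    define n where "n = T - length h"
    have hc1: "\<And>h'. cont f1 h ([] @ h') = pt (fst (P p (l + length h')))"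
      using h by (simp add: cont_def f1_def p_def l_def)
    have hc2: "\<And>h'. cont f2 h ([] @ h') = pt (snd (P p (l + length h')))"
      using h by (simp add: cont_def f2_def p_def l_def)
    have ev: "rval u (cont f1 h) (cont f2 h) [] n = (\<Sum>k<n. u (fst (P p (l + k))) (snd (P p (l + k))))" for u
      using rval_eq[where FF="cont f1 h" and GG="cont f2 h" and hz="[]" and SS="\<lambda>k. fst (P p (l + k))"
          and QQ="\<lambda>k. snd (P p (l + k))" and u=u and hh="[]" and n=n, OF hc1 hc2] by simp
    have d1: "rval u1 g1 (cont f2 h) [] n \<le> rval u1 (cont f1 h) (cont f2 h) [] n" if g: "strat False g1" for g1
      using rval_le1[where FF=g1 and GG="cont f2 h" and hz="[]" and QQ="\<lambda>k. snd (P p (l + k))"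
          and c="\<lambda>k. U1 (P p (l + k))" and u=u1 and hh="[]" and n=n] g hc2 PN1 ev[of u1]
      by (simp add: strat_def avail_def U1_def)
    have d2: "rval u2 (cont f1 h) g2 [] n \<le> rval u2 (cont f1 h) (cont f2 h) [] n" if g: "strat False g2" for g2
      using rval_le2[where GG=g2 and FF="cont f1 h" and hz="[]" and SS="\<lambda>k. fst (P p (l + k))"
          and c="\<lambda>k. U2 (P p (l + k))" and u=u2 and hh="[]" and n=n] g hc1 PN2 ev[of u2]
      by (simp add: strat_def avail_def U2_def)
    have "strat False (cont f1 h)" "strat False (cont f2 h)"
      using sf1 sf2 by (simp_all add: strat_def cont_def)
    then show ?thesis unfolding repNash_def using d1 d2 by (simp add: n_def)
  qed
  have SPE: "SPE (False, False) u1 u2 T f1 f2"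
    unfolding SPE_def
  proof (intro conjI allI impI)
    show "strat (fst (False, False)) f1" "strat (snd (False, False)) f2" using sf1 sf2 by simp_all
    fix h :: "('a \<times> 'b) list" assume "length h < T"
    show "repNash (False, False) u1 u2 (T - length h) (cont f1 h) (cont f2 h)"
    proof (cases "h = []")
      case True
      have "cont f1 [] = f1" "cont f2 [] = f2" by (simp_all add: cont_def)
      then show ?thesis using True sf1 sf2 root1 root2 by (simp add: repNash_def)
    next
      case False then show ?thesis by (rule nonroot)
    qed
  qed
  have "(f1 [], f2 []) \<notin> stageNash (False, False) u1 u2"
    using nne pureNE_iff[of a0 b0 u1 u2] by (simp add: f1_def f2_def isNE_def)
  then show ?thesis unfolding LS_def using SPE
    by (intro exI[of _ T] conjI exI[of _ f1] exI[of _ f2] exI[of _ "[]"]) (auto simp: T_def)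
qed

end
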